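(* Let $n\ge 2$ and let $p$ be a strongly 312-avoiding permutation of $\{1,\dots,n\}$ with $p_n=1$. If $p_1>p_2$, then $p$ is the decreasing permutation $n\,(n-1)\cdots 2\,1$.
   Context: Permutations are written in one-line notation $p=p_1\cdots p_n$ with $p_i=p(i)$. $p$ contains a pattern $q=q_1\cdots q_m$ if there are indices $i_1<\cdots<i_m$ with $p_{i_r}<p_{i_s}$ iff $q_r<q_s$; otherwise $p$ avoids $q$. $p^2(i)=p(p(i))$. A permutation $p$ is strongly $q$-avoiding if both $p$ and $p^2$ avoid $q$. *)

theory Defs
  imports "HOL-Combinatorics.Permutations"
begin

text \<open>A permutation of {1..n} is a function p :: nat => nat with p permutes {1..n}
  (one-line notation p_i = p i). A pattern q = q_1 ... q_m is given as a list
  (q_r = q ! (r-1)).  p contains q if there are indices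
  1 <= i_1 < ... < i_m <= n with p(i_r) < p(i_s) iff q_r < q_s.\<close>

definition contains_pattern :: "nat \<Rightarrow> (nat \<Rightarrow> nat) \<Rightarrow> nat list \<Rightarrow> bool" where
  "contains_pattern n p q \<longleftrightarrow>
     (\<exists>i :: nat \<Rightarrow> nat.
        (\<forall>r < length q. i r \<in> {1..n}) \<and>
        (\<forall>r s. r < s \<and> s < length q \<longrightarrow> i r < i s) \<and>
        (\<forall>r < length q. \<forall>s < length q. (p (i r) < p (i s) \<longleftrightarrow> q ! r < q ! s)))"

definition avoids_pattern :: "nat \<Rightarrow> (nat \<Rightarrow> nat) \<Rightarrow> nat list \<Rightarrow> bool" where
  "avoids_pattern n p q \<longleftrightarrow> \<not> contains_pattern n p q"

definition strongly_avoiding :: "nat \<Rightarrow> (nat \<Rightarrow> nat) \<Rightarrow> nat list \<Rightarrow> bool" where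
  "strongly_avoiding n p q \<longleftrightarrow> avoids_pattern n p q \<and> avoids_pattern n (p \<circ> p) q"

end

theory Submission
  imports Defs
begin

lemma contains312:
  assumes "x \<in> {1..n}" "y \<in> {1..n}" "z \<in> {1..n}" "x < y" "y < z"
    "f y < f z" "f z < f x"
  shows "contains_pattern n f [3,1,2]"
  unfolding contains_pattern_def
proof (rule exI[of _ "\<lambda>r. if r = 0 then x else if r = 1 then y else z"], intro conjI allI impI)
  have L: "\<And>P. (\<forall>r<length [3,1,2::nat]. P r) \<longleftrightarrow> P 0 \<and> P 1 \<and> P (2::nat)"
    by (auto simp: less_Suc_eq numeral_2_eq_2)
  fix r assume "r < length [3,1,2::nat]"
  then have "r = 0 \<or> r = 1 \<or> r = 2" by (auto simp: less_Suc_eq numeral_2_eq_2)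
  then show "(if r = 0 then x else if r = 1 then y else z) \<in> {1..n}" using assms by auto
next
  fix r s assume "r < s \<and> s < length [3,1,2::nat]"
  then have "(r = 0 \<and> s = 1) \<or> (r = 0 \<and> s = 2) \<or> (r = 1 \<and> s = 2)"
    by (auto simp: less_Suc_eq numeral_2_eq_2)
  then show "(if r = 0 then x else if r = 1 then y else z) < (if s = 0 then x else if s = 1 then y else z)"
    using assms by auto
next
  fix r s assume r: "r < length [3,1,2::nat]" and s: "s < length [3,1,2::nat]"
  from r have "r = 0 \<or> r = 1 \<or> r = 2" by (auto simp: less_Suc_eq numeral_2_eq_2)
  moreover from s have "s = 0 \<or> s = 1 \<or> s = 2" by (auto simp: less_Suc_eq numeral_2_eq_2)
  ultimately show "(f (if r = 0 then x else if r = 1 then y else z)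
         < f (if s = 0 then x else if s = 1 then y else z)) = ([3, 1, 2::nat] ! r < [3, 1, 2] ! s)"
    using assms by auto
qed

theorem lemma3p5:
  fixes n :: nat and p :: "nat \<Rightarrow> nat"
  assumes "n \<ge> 2"
    and "p permutes {1..n}"
    and "strongly_avoiding n p [3, 1, 2]"
    and "p n = 1"
    and "p 1 > p 2"
  shows "\<forall>i \<in> {1..n}. p i = n + 1 - i"
proof -
  note perm = assms(2)
  define q where "q = p \<circ> p"
  have qperm: "q permutes {1..n}" unfolding q_def by (rule permutes_compose[OF perm perm])
  have avp: "\<not> contains_pattern n p [3,1,2]" and avq: "\<not> contains_pattern n q [3,1,2]"
    using assms(3) unfolding strongly_avoiding_def avoids_pattern_def q_def by auto
  have P: "\<not> (x < y \<and> y < z \<and> p y < p z \<and> p z < p x)" if "x \<in> {1..n}" "y \<in> {1..n}" "z \<in> {1..n}" for x y z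
    using contains312[of x n y z p] avp that by blast
  have Q: "\<not> (x < y \<and> y < z \<and> q y < q z \<and> q z < q x)" if "x \<in> {1..n}" "y \<in> {1..n}" "z \<in> {1..n}" for x y z
    using contains312[of x n y z q] avq that by blast
  have pin: "p x \<in> {1..n}" if "x \<in> {1..n}" for x using permutes_in_image[OF perm] that by blast
  have qin: "q x \<in> {1..n}" if "x \<in> {1..n}" for x using permutes_in_image[OF qperm] that by blast
  have pinj: "p x = p y \<Longrightarrow> x = y" for x y using permutes_inj[OF perm] by (auto dest: injD)
  have qinj: "q x = q y \<Longrightarrow> x = y" for x y using permutes_inj[OF qperm] by (auto dest: injD)
  have psurj: "\<exists>x\<in>{1..n}. p x = v" if "v \<in> {1..n}" for v
    using permutes_image[OF perm] that by (metis imageE)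
  have qsurj: "\<exists>x\<in>{1..n}. q x = v" if "v \<in> {1..n}" for v
    using permutes_image[OF qperm] that by (metis imageE)
  define a where "a = p 1"
  have n1: "1 \<in> {1..n}" "2 \<in> {1..n}" "n \<in> {1..n}" using assms(1) by auto
  have ain: "a \<in> {1..n}" using pin n1 a_def by auto
  have p2: "p 2 \<ge> 1" using pin n1 by auto
  have a2: "a \<ge> 2" using assms(5) p2 a_def by auto
  have qn: "q n = a" using assms(4) a_def q_def by simp
  have KL: False if j: "a \<le> j" "j < n" "q j < a" for j
  proof -
    define B where "B = {i \<in> {1..n}. a < q i}"
    have "q ` B = {a+1..n}"
    proof
      show "q ` B \<subseteq> {a+1..n}" using qin unfolding B_def by force
      show "{a+1..n} \<subseteq> q ` B"
      proof
        fix v assume v: "v \<in> {a+1..n}"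
        then have "v \<in> {1..n}" using ain by auto
        then obtain x where "x \<in> {1..n}" "q x = v" using qsurj by blast
        then show "v \<in> q ` B" using v unfolding B_def by auto
      qed
    qed
    moreover have "inj_on q B" using qinj by (auto intro: inj_onI)
    ultimately have cB: "card B = n - a" by (metis card_atLeastAtMost card_image diff_Suc_Suc Suc_eq_plus1)
    have "B \<subseteq> {j+1..n-1}"
    proof
      fix i assume i: "i \<in> B"
      then have i1: "i \<in> {1..n}" "a < q i" unfolding B_def by auto
      have "i \<noteq> n" using i1 qn by auto
      moreover have "i \<noteq> j" using i1 j by auto
      moreover have "\<not> i < j" using Q[of i j n] i1 j n1 qn ain by auto
      ultimately show "i \<in> {j+1..n-1}" using i1 by auto
    qed
    then have "card B \<le> n - 1 - j" by (metis card_atLeastAtMost card_mono finite_atLeastAtMost diff_Suc_Suc Suc_eq_plus1)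
    then show False using cB j by linarith
  qed
  have an: "a = n"
  proof (rule ccontr)
    assume "a \<noteq> n"
    then have an: "a < n" using ain by auto
    obtain k where k: "k \<in> {1..n}" "p k = n" using psurj n1 by blast
    have "k \<noteq> n" using k assms by auto
    moreover have "q k = 1" using k assms(4) q_def by simp
    ultimately have "k < a" using KL[of k] a2 k by force
    moreover have "k \<noteq> 1" using k a_def an by auto
    ultimately have kr: "k \<in> {2..a-1}" using k by auto
    obtain j0 where j0: "j0 \<in> {1..n}" "p j0 = 2" using psurj n1 by blast
    have "j0 \<noteq> n" using j0 assms by auto
    moreover have "q j0 < a" using j0 assms(5) q_def a_def by simp
    ultimately have j0a: "j0 < a" using KL[of j0] j0 by force
    have sub: "{2..a-1} \<subseteq> p ` {2..a-1}"
    proof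
      fix s assume s: "s \<in> {2..a-1}"
      then have "s \<in> {1..n}" using ain by auto
      then obtain t where t: "t \<in> {1..n}" "p t = s" using psurj by blast
      have "t \<noteq> 1" using t s a_def by auto
      moreover have "t \<le> j0"
      proof (rule ccontr)
        assume "\<not> t \<le> j0"
        moreover have "j0 \<noteq> 1" using j0 s a_def by auto
        moreover have "s \<noteq> 2" using t j0 \<open>\<not> t \<le> j0\<close> pinj[of t j0] by auto
        ultimately show False using P[of 1 j0 t] t j0 n1 s a_def by auto
      qed
      ultimately have "t \<in> {2..a-1}" using t j0a by auto
      then show "s \<in> p ` {2..a-1}" using t by auto
    qed
    have "card (p ` {2..a-1}) \<le> card {2..a-1}" by (rule card_image_le) simp
    moreover have "card {2..a-1} \<le> card (p ` {2..a-1})" using sub by (intro card_mono) auto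
    ultimately have "{2..a-1} = p ` {2..a-1}" using sub by (intro card_subset_eq) (auto intro: finite_imageI)
    then have "p k \<in> {2..a-1}" using kr by auto
    then show False using k an by auto
  qed
  have dec: "p j < p i" if "2 \<le> i" "i < j" "j \<le> n" for i j
  proof -
    have "p i \<noteq> p j" using pinj that by auto
    moreover have "p j \<noteq> n" using pinj[of j 1] that a_def an by auto
    moreover have "p j \<le> n" using pin that by auto
    ultimately show ?thesis using P[of 1 i j] that a_def an by auto
  qed
  have lo: "p i \<ge> n + 1 - i" if "2 \<le> i" "i \<le> n" for i
    using that(2,1)
  proof (induction i rule: inc_induct)
    case base then show ?case using assms(4) by simp
  next
    case (step m)
    then have "p (Suc m) < p m" using dec[of m "Suc m"] by auto
    with step show ?case by auto
  qed
  have hi: "p i \<le> n + 1 - i" if "2 \<le> i" "i \<le> n" for i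
    using that(1,2)
  proof (induction i rule: dec_induct)
    case base then show ?case using assms(5) a_def an by simp
  next
    case (step m)
    then have "p (Suc m) < p m" using dec[of m "Suc m"] by auto
    with step show ?case by auto
  qed
  show ?thesis
  proof
    fix i assume i: "i \<in> {1..n}"
    show "p i = n + 1 - i"
    proof (cases "i = 1")
      case True then show ?thesis using a_def an by simp
    next
      case False then show ?thesis using lo[of i] hi[of i] i by force
    qed
  qed
qed

end
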